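(* Let $m,n\ge 1$, $k=\min(m,n)$, and let $M^\star\in\mathbb{R}^{m\times n}$ have singular value decomposition $M^\star=P\Sigma Q^\top$ with $P\in\mathbb{R}^{m\times k}$, $Q\in\mathbb{R}^{n\times k}$ having orthonormal columns $p_i,q_i$ and $\Sigma=\mathrm{diag}(\sigma_1,\dots,\sigma_k)$ with $\sigma_1>\sigma_2>\cdots>\sigma_k>0$. For $r\in\{1,\dots,k\}$ let $A_r=\sum_{i=1}^r\sigma_ip_iq_i^\top$, let $\Pi_S$ denote the $k\times k$ diagonal matrix with $(\Pi_S)_{ii}=1$ if $i\in S$ and $0$ otherwise, $[r]=\{1,\dots,r\}$, and for $U\in\mathbb{R}^{m\times k}$, $V\in\mathbb{R}^{n\times k}$ let $$\mathcal{E}(U,V,r)=\min_{S_r\subseteq\{1,\dots,k\},\,|S_r|=r}\bigl\|U\Pi_{S_r}V^\top-A_r\bigr\|_F^2.$$ Let $$\mathcal{M}_{\mathrm{NSL}}=\arg\min_{U\in\mathbb{R}^{m\times k},\,V\in\mathbb{R}^{n\times k}}\frac1k\sum_{r=1}^k\bigl\|U\Pi_{[r]}V^\top-M^\star\bigr\|_F^2.$$ Then for every $(U,V)\in\mathcal{M}_{\mathrm{NSL}}$ and every $r\in\{1,\dots,k\}$, $\mathcal{E}(U,V,r)=0$.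
   Context: $\|\cdot\|_F$ is the Frobenius norm. *)

theory Defs
  imports "Jordan_Normal_Form.Matrix"
begin

definition frob_norm :: "real mat \<Rightarrow> real" where
  "frob_norm A = sqrt (\<Sum>i<dim_row A. \<Sum>j<dim_col A. (A $$ (i,j))\<^sup>2)"

(* \<Pi>_S : k x k diagonal 0/1 matrix; indices are 0-based, S \<subseteq> {0..<k} *)
definition sel_mat :: "nat \<Rightarrow> nat set \<Rightarrow> real mat" where
  "sel_mat k S = mat k k (\<lambda>(i,j). if i = j \<and> i \<in> S then 1 else 0)"

definition diag_sv :: "nat \<Rightarrow> (nat \<Rightarrow> real) \<Rightarrow> real mat" where
  "diag_sv k \<sigma> = mat k k (\<lambda>(i,j). if i = j then \<sigma> i else 0)"

definition trunc_svd :: "nat \<Rightarrow> nat \<Rightarrow> real mat \<Rightarrow> real mat \<Rightarrow> (nat \<Rightarrow> real) \<Rightarrow> nat \<Rightarrow> real mat" where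
  "trunc_svd m n P Q \<sigma> r = mat m n (\<lambda>(a,b). \<Sum>i<r. \<sigma> i * P $$ (a,i) * Q $$ (b,i))"

definition err_E :: "nat \<Rightarrow> real mat \<Rightarrow> real mat \<Rightarrow> real mat \<Rightarrow> nat \<Rightarrow> real" where
  "err_E k U V Ar r = Min {(frob_norm (U * sel_mat k S * transpose_mat V - Ar))\<^sup>2 | S. S \<subseteq> {0..<k} \<and> card S = r}"

definition nsl_loss :: "nat \<Rightarrow> real mat \<Rightarrow> real mat \<Rightarrow> real mat \<Rightarrow> real" where
  "nsl_loss k M U V = (1 / real k) * (\<Sum>r=1..k. (frob_norm (U * sel_mat k {0..<r} * transpose_mat V - M))\<^sup>2)"

definition M_NSL :: "nat \<Rightarrow> nat \<Rightarrow> nat \<Rightarrow> real mat \<Rightarrow> (real mat \<times> real mat) set" where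
  "M_NSL m n k M = {(U,V). U \<in> carrier_mat m k \<and> V \<in> carrier_mat n k \<and>
      (\<forall>U' \<in> carrier_mat m k. \<forall>V' \<in> carrier_mat n k. nsl_loss k M U V \<le> nsl_loss k M U' V')}"

end

theory Submission
  imports Defs
begin

definition ortho :: "nat \<Rightarrow> nat \<Rightarrow> (nat \<Rightarrow> nat \<Rightarrow> real) \<Rightarrow> bool" where
  "ortho m r E \<longleftrightarrow> (\<forall>j<r. \<forall>j'<r. (\<Sum>a<m. E a j * E a j') = (if j = j' then 1 else 0))"

definition fs :: "nat \<Rightarrow> nat \<Rightarrow> (nat \<Rightarrow> nat \<Rightarrow> real) \<Rightarrow> real" where
  "fs m c X = (\<Sum>a<m. \<Sum>b<c. (X a b)^2)"

lemma row_iso: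
  assumes "ortho m r E"
  shows "(\<Sum>a<m. (\<Sum>j<r. E a j * w j)^2) = (\<Sum>j<r. (w j)^2)"
proof -
  have "(\<Sum>a<m. (\<Sum>j<r. E a j * w j)^2) = (\<Sum>a<m. \<Sum>j<r. \<Sum>j'<r. w j * w j' * (E a j * E a j'))"
    by (simp add: power2_eq_square sum_product algebra_simps)
  also have "\<dots> = (\<Sum>j<r. \<Sum>j'<r. \<Sum>a<m. w j * w j' * (E a j * E a j'))"
    by (subst sum.swap, rule sum.cong, simp, subst sum.swap, simp)
  also have "\<dots> = (\<Sum>j<r. \<Sum>j'<r. w j * w j' * (if j = j' then 1 else 0))"
    using assms unfolding ortho_def by (simp add: sum_distrib_left[symmetric])
  also have "\<dots> = (\<Sum>j<r. (w j)^2)"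
    by (simp add: power2_eq_square if_distrib cong: if_cong)
  finally show ?thesis .
qed

lemma pyth_col:
  assumes "ortho m r E" "\<forall>j<r. (\<Sum>a<m. E a j * R a) = 0"
  shows "(\<Sum>a<m. (R a + (\<Sum>j<r. E a j * w j))^2) = (\<Sum>a<m. (R a)^2) + (\<Sum>j<r. (w j)^2)"
proof -
  have cross: "(\<Sum>a<m. R a * (\<Sum>j<r. E a j * w j)) = 0"
  proof -
    have "(\<Sum>a<m. R a * (\<Sum>j<r. E a j * w j)) = (\<Sum>j<r. w j * (\<Sum>a<m. E a j * R a))"
      by (simp add: sum_distrib_left sum_distrib_right algebra_simps sum.swap[of _ "{..<r}"])
    also have "\<dots> = 0" using assms(2) by simp
    finally show ?thesis .
  qed
  have "(\<Sum>a<m. (R a + (\<Sum>j<r. E a j * w j))^2) =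
     (\<Sum>a<m. (R a)^2) + 2 * (\<Sum>a<m. R a * (\<Sum>j<r. E a j * w j)) + (\<Sum>a<m. (\<Sum>j<r. E a j * w j)^2)"
    by (simp add: power2_sum sum.distrib sum_distrib_left algebra_simps)
  also have "\<dots> = (\<Sum>a<m. (R a)^2) + (\<Sum>j<r. (w j)^2)"
    using cross row_iso[OF assms(1)] by simp
  finally show ?thesis .
qed

lemma resid_orth:
  assumes "ortho m r E" "j < r"
  shows "(\<Sum>a<m. E a j * (x a - (\<Sum>j'<r. E a j' * (\<Sum>b<m. E b j' * x b)))) = 0"
proof -
  have "(\<Sum>a<m. E a j * (x a - (\<Sum>j'<r. E a j' * (\<Sum>b<m. E b j' * x b)))) =
      (\<Sum>a<m. E a j * x a) - (\<Sum>j'<r. (\<Sum>a<m. E a j * E a j') * (\<Sum>b<m. E b j' * x b))"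
    by (simp add: right_diff_distrib sum_subtractf sum_distrib_left sum_distrib_right
        algebra_simps sum.swap[of _ "{..<r}"])
  also have "\<dots> = (\<Sum>a<m. E a j * x a) - (\<Sum>j'<r. if j = j' then (\<Sum>b<m. E b j' * x b) else 0)"
    using assms unfolding ortho_def by (intro arg_cong2[where f="(-)"] sum.cong) auto
  also have "\<dots> = 0" using assms(2) by (simp add: mult.commute)
  finally show ?thesis .
qed

lemma bessel_eq:
  assumes "ortho m r E"
  shows "(\<Sum>a<m. (x a)^2) = (\<Sum>a<m. (x a - (\<Sum>j<r. E a j * (\<Sum>b<m. E b j * x b)))^2)
          + (\<Sum>j<r. (\<Sum>b<m. E b j * x b)^2)"
proof -
  let ?S = "\<lambda>a. \<Sum>j<r. E a j * (\<Sum>b<m. E b j * x b)"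
  have "(\<Sum>a<m. (x a)^2) = (\<Sum>a<m. ((x a - ?S a) + ?S a)^2)" by simp
  also have "\<dots> = (\<Sum>a<m. (x a - ?S a)^2) + (\<Sum>j<r. (\<Sum>b<m. E b j * x b)^2)"
    by (rule pyth_col[OF assms], use resid_orth[OF assms] in auto)
  finally show ?thesis .
qed

lemma bessel:
  assumes "ortho m r E"
  shows "(\<Sum>j<r. (\<Sum>b<m. E b j * x b)^2) \<le> (\<Sum>a<m. (x a)^2)"
  using bessel_eq[OF assms, of x] by (smt (verit) sum_nonneg zero_le_power2)

lemma fs_swap: "fs m c X = fs c m (\<lambda>b a. X a b)"
  unfolding fs_def by (rule sum.swap)

lemma pyth:
  assumes "ortho m r E" "\<forall>j<r. \<forall>c<nc. (\<Sum>a<m. E a j * R a c) = 0"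
  shows "fs m nc (\<lambda>a c. R a c + (\<Sum>j<r. E a j * W j c)) = fs m nc R + fs r nc W"
proof -
  have "fs m nc (\<lambda>a c. R a c + (\<Sum>j<r. E a j * W j c)) = (\<Sum>c<nc. \<Sum>a<m. (R a c + (\<Sum>j<r. E a j * W j c))^2)"
    unfolding fs_def by (rule sum.swap)
  also have "\<dots> = (\<Sum>c<nc. (\<Sum>a<m. (R a c)^2) + (\<Sum>j<r. (W j c)^2))"
    by (rule sum.cong, simp, rule pyth_col[OF assms(1)], use assms(2) in auto)
  also have "\<dots> = fs m nc R + fs r nc W"
    unfolding fs_def sum.distrib by (simp add: sum.swap[of _ "{..<nc}"])
  finally show ?thesis .
qed

lemma iso_right:
  assumes "ortho n k Q"
  shows "fs p n (\<lambda>j b. \<Sum>i<k. Y j i * Q b i) = fs p k Y"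
  unfolding fs_def
proof (rule sum.cong, simp)
  fix j
  show "(\<Sum>b<n. (\<Sum>i<k. Y j i * Q b i)\<^sup>2) = (\<Sum>b<k. (Y j b)\<^sup>2)"
    using row_iso[OF assms, of "Y j"] by (simp add: mult.commute)
qed

lemma fs_diag:
  assumes "ortho m k P" "ortho n k Q"
  shows "fs m n (\<lambda>a b. \<Sum>i<k. \<tau> i * P a i * Q b i) = (\<Sum>i<k. (\<tau> i)^2)"
proof -
  have "fs m n (\<lambda>a b. \<Sum>i<k. \<tau> i * P a i * Q b i) = fs m k (\<lambda>a i. \<tau> i * P a i)"
    using iso_right[OF assms(2), of m "\<lambda>a i. \<tau> i * P a i"] by simp
  also have "\<dots> = (\<Sum>i<k. (\<tau> i)^2 * (\<Sum>a<m. P a i * P a i))"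
    unfolding fs_def by (simp add: sum.swap[of _ "{..<k}"] sum_distrib_left power2_eq_square algebra_simps)
  also have "\<dots> = (\<Sum>i<k. (\<tau> i)^2)"
    using assms(1) unfolding ortho_def by simp
  finally show ?thesis .
qed

lemma normalize_vec:
  fixes y :: "nat \<Rightarrow> real"
  assumes "a0 < m" "y a0 \<noteq> 0" "\<forall>j<r. (\<Sum>a<m. E a j * y a) = 0"
  shows "\<exists>e t. (\<Sum>a<m. (e a)^2) = 1 \<and> (\<forall>j<r. (\<Sum>a<m. E a j * e a) = 0) \<and> (\<forall>a. y a = t * e a)"
proof -
  define s where "s = (\<Sum>a<m. (y a)^2)"
  have "(y a0)^2 \<le> s" unfolding s_def
    using member_le_sum[of a0 "{..<m}" "\<lambda>a. (y a)^2"] assms(1) by simp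
  moreover have "(y a0)^2 > 0" using assms(2) by simp
  ultimately have sp: "s > 0" by linarith
  define t where "t = sqrt s"
  have tp: "t > 0" using sp unfolding t_def by simp
  have tt: "t^2 = s" using sp unfolding t_def by simp
  define e where "e = (\<lambda>a. y a / t)"
  have "(\<Sum>a<m. (e a)^2) = s / t^2" unfolding e_def s_def
    by (simp add: power_divide sum_divide_distrib)
  also have "\<dots> = 1" using tt sp by simp
  finally have 1: "(\<Sum>a<m. (e a)^2) = 1" .
  have 2: "\<forall>j<r. (\<Sum>a<m. E a j * e a) = 0"
  proof (intro allI impI)
    fix j assume "j < r"
    have "(\<Sum>a<m. E a j * e a) = (\<Sum>a<m. E a j * y a) / t"
      unfolding e_def by (simp add: sum_divide_distrib)
    then show "(\<Sum>a<m. E a j * e a) = 0" using assms(3) \<open>j < r\<close> by simp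
  qed
  have 3: "\<forall>a. y a = t * e a" unfolding e_def using tp by simp
  show ?thesis using 1 2 3 by blast
qed

lemma unit_exists:
  assumes "ortho m r E" "r < m"
  shows "\<exists>e. (\<Sum>a<m. (e a)^2) = 1 \<and> (\<forall>j<r. (\<Sum>a<m. E a j * e a) = 0)"
proof -
  define d where "d = (\<lambda>(b::nat) (a::nat). if a = b then (1::real) else 0)"
  define y where "y = (\<lambda>b a. d b a - (\<Sum>j<r. E a j * (\<Sum>c<m. E c j * d b c)))"
  have yd: "y b a = d b a - (\<Sum>j<r. E a j * E b j)" if "b < m" for a b
    unfolding y_def d_def using that by (simp add: if_distrib cong: if_cong)
  have "\<exists>b<m. \<exists>a<m. y b a \<noteq> 0"
  proof (rule ccontr)
    assume "\<not> ?thesis"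
    then have z: "\<And>b a. b < m \<Longrightarrow> a < m \<Longrightarrow> y b a = 0" by auto
    have h: "\<And>b a. b < m \<Longrightarrow> a < m \<Longrightarrow> d b a = (\<Sum>j<r. E a j * E b j)"
      using z yd by (metis eq_iff_diff_eq_0)
    have "real m = (\<Sum>b<m. d b b)" unfolding d_def by simp
    also have "\<dots> = (\<Sum>b<m. \<Sum>j<r. E b j * E b j)" by (intro sum.cong refl) (simp add: h)
    also have "\<dots> = (\<Sum>j<r. \<Sum>b<m. E b j * E b j)" by (rule sum.swap)
    also have "\<dots> = real r" using assms(1) unfolding ortho_def by simp
    finally show False using assms(2) by simp
  qed
  then obtain b a0 where b: "b < m" "a0 < m" "y b a0 \<noteq> 0" by blast
  have "\<forall>j<r. (\<Sum>a<m. E a j * y b a) = 0"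
    unfolding y_def by (intro allI impI) (rule resid_orth[OF assms(1)])
  from normalize_vec[OF b(2,3) this] show ?thesis by blast
qed

lemma ext_vec:
  assumes "ortho m r E" "r < m"
  shows "\<exists>e t. (\<Sum>a<m. (e a)^2) = 1 \<and> (\<forall>j<r. (\<Sum>a<m. E a j * e a) = 0) \<and>
      (\<forall>a<m. x a = (\<Sum>j<r. E a j * (\<Sum>b<m. E b j * x b)) + t * e a)"
proof (cases "\<exists>a0<m. x a0 - (\<Sum>j<r. E a0 j * (\<Sum>b<m. E b j * x b)) \<noteq> 0")
  case True
  then obtain a0 where a0: "a0 < m" "x a0 - (\<Sum>j<r. E a0 j * (\<Sum>b<m. E b j * x b)) \<noteq> 0" by blast
  have "\<forall>j<r. (\<Sum>a<m. E a j * (x a - (\<Sum>j<r. E a j * (\<Sum>b<m. E b j * x b)))) = 0"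
    by (intro allI impI) (rule resid_orth[OF assms(1)])
  from normalize_vec[OF a0 this] obtain e t where
    et: "(\<Sum>a<m. (e a)^2) = 1" "\<forall>j<r. (\<Sum>a<m. E a j * e a) = 0"
    "\<forall>a. x a - (\<Sum>j<r. E a j * (\<Sum>b<m. E b j * x b)) = t * e a" by blast
  have "\<forall>a<m. x a = (\<Sum>j<r. E a j * (\<Sum>b<m. E b j * x b)) + t * e a"
  proof (intro allI impI)
    fix a
    have "x a - (\<Sum>j<r. E a j * (\<Sum>b<m. E b j * x b)) = t * e a" using et(3) by blast
    then show "x a = (\<Sum>j<r. E a j * (\<Sum>b<m. E b j * x b)) + t * e a" by linarith
  qed
  then show ?thesis using et(1,2) by blast
next
  case False
  from unit_exists[OF assms] obtain e where e: "(\<Sum>a<m. (e a)^2) = 1" "\<forall>j<r. (\<Sum>a<m. E a j * e a) = 0"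
    by blast
  have "\<forall>a<m. x a = (\<Sum>j<r. E a j * (\<Sum>b<m. E b j * x b)) + 0 * e a"
  proof (intro allI impI)
    fix a assume "a < m"
    then have "\<not> (x a - (\<Sum>j<r. E a j * (\<Sum>b<m. E b j * x b)) \<noteq> 0)" using False by blast
    then show "x a = (\<Sum>j<r. E a j * (\<Sum>b<m. E b j * x b)) + 0 * e a" by linarith
  qed
  then show ?thesis using e by blast
qed

lemma qr:
  "r \<le> m \<Longrightarrow> \<exists>E C. ortho m r E \<and> (\<forall>a<m. \<forall>l<r. A a l = (\<Sum>j<r. E a j * C j l))"
proof (induction r)
  case 0
  then show ?case unfolding ortho_def by auto
next
  case (Suc r)
  then obtain E C where EC: "ortho m r E" "\<forall>a<m. \<forall>l<r. A a l = (\<Sum>j<r. E a j * C j l)" by auto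
  from ext_vec[OF EC(1), of "\<lambda>a. A a r"] Suc.prems obtain e t where
    et: "(\<Sum>a<m. (e a)^2) = 1" "\<forall>j<r. (\<Sum>a<m. E a j * e a) = 0"
      "\<forall>a<m. A a r = (\<Sum>j<r. E a j * (\<Sum>b<m. E b j * A b r)) + t * e a" by auto
  define E' where "E' = (\<lambda>a j. if j = r then e a else E a j)"
  define C' where "C' = (\<lambda>j l. if l < r then (if j < r then C j l else 0)
                                else (if j < r then (\<Sum>b<m. E b j * A b r) else t))"
  have "ortho m (Suc r) E'"
    unfolding ortho_def
  proof (intro allI impI)
    fix j j' assume j: "j < Suc r" "j' < Suc r"
    show "(\<Sum>a<m. E' a j * E' a j') = (if j = j' then 1 else 0)"
    proof (cases "j = r"; cases "j' = r")
      assume "j = r" "j' = r" then show ?thesis using et(1) unfolding E'_def by (simp add: power2_eq_square)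
    next
      assume "j = r" "j' \<noteq> r" then show ?thesis using et(2) j unfolding E'_def by (simp add: mult.commute)
    next
      assume "j \<noteq> r" "j' = r" then show ?thesis using et(2) j unfolding E'_def by simp
    next
      assume "j \<noteq> r" "j' \<noteq> r" then show ?thesis using EC(1) j unfolding E'_def ortho_def by simp
    qed
  qed
  moreover have "\<forall>a<m. \<forall>l<Suc r. A a l = (\<Sum>j<Suc r. E' a j * C' j l)"
  proof (intro allI impI)
    fix a l assume al: "a < m" "l < Suc r"
    have "(\<Sum>j<Suc r. E' a j * C' j l) = (\<Sum>j<r. E a j * C' j l) + e a * C' r l"
      unfolding E'_def by simp
    moreover have "A a l = (\<Sum>j<r. E a j * C' j l) + e a * C' r l"
    proof (cases "l < r")
      case True
      then have "(\<Sum>j<r. E a j * C' j l) = (\<Sum>j<r. E a j * C j l)" "C' r l = 0" unfolding C'_def by auto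
      then show ?thesis using EC(2) al True by simp
    next
      case False
      then have lr: "l = r" using al by simp
      have h: "(\<Sum>j<r. E a j * C' j r) = (\<Sum>j<r. E a j * (\<Sum>b<m. E b j * A b r))" "C' r r = t"
        unfolding C'_def by auto
      have fa: "A a r = (\<Sum>j<r. E a j * (\<Sum>b<m. E b j * A b r)) + t * e a" by (rule et(3)[rule_format, OF al(1)])
      show ?thesis by (simp only: h lr) (rule trans[OF fa], simp)
    qed
    ultimately show "A a l = (\<Sum>j<Suc r. E' a j * C' j l)" by simp
  qed
  ultimately show ?case by blast
qed

lemma sum_split_at:
  fixes r k :: nat shows "r \<le> k \<Longrightarrow> (\<Sum>i<k. f i) = (\<Sum>i<r. f i) + (\<Sum>i\<in>{r..<k}. (f i :: real))"
proof -
  assume "r \<le> k"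
  then have "{..<k} = {..<r} \<union> {r..<k}" by auto
  moreover have "{..<r} \<inter> {r..<k} = {}" by auto
  ultimately show ?thesis using sum.union_disjoint[of "{..<r}" "{r..<k}" f] by simp
qed

lemma scalar_bound:
  fixes \<sigma> w :: "nat \<Rightarrow> real"
  assumes r: "1 \<le> r" "r \<le> k"
    and dec: "\<And>i j. i < j \<Longrightarrow> j < k \<Longrightarrow> \<sigma> j < \<sigma> i"
    and pos: "\<And>i. i < k \<Longrightarrow> 0 < \<sigma> i"
    and w0: "\<And>i. i < k \<Longrightarrow> 0 \<le> w i" and w1: "\<And>i. i < k \<Longrightarrow> w i \<le> 1"
    and ws: "(\<Sum>i<k. w i) \<le> r"
  shows "(\<Sum>i\<in>{r..<k}. (\<sigma> i)^2) \<le> (\<Sum>i<k. (\<sigma> i)^2 * (1 - w i))"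
    and "(\<Sum>i\<in>{r..<k}. (\<sigma> i)^2) = (\<Sum>i<k. (\<sigma> i)^2 * (1 - w i)) \<Longrightarrow>
         \<forall>i<k. w i = (if i < r then 1 else 0)"
proof -
  define c where "c = (\<sigma> (r - 1))^2"
  have "r - 1 < k" using r by simp
  then have cpos: "c > 0" unfolding c_def using pos[of "r - 1"] by simp
  have ge: "(\<sigma> i)^2 \<ge> c" if "i < r" for i
  proof -
    have "\<sigma> i \<ge> \<sigma> (r - 1)" proof (cases "i = r - 1")
      case False
      then have "i < r - 1" "r - 1 < k" using that r by auto
      then show ?thesis using dec[of i "r - 1"] by simp
    qed simp
    moreover have "\<sigma> (r - 1) > 0" using pos r by simp
    ultimately show ?thesis unfolding c_def by (simp add: power_mono)
  qed
  have lt: "(\<sigma> i)^2 < c" if "r \<le> i" "i < k" for i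
  proof -
    have "\<sigma> i < \<sigma> (r - 1)" using dec[of "r - 1" i] that r by simp
    moreover have "\<sigma> i > 0" using pos that by simp
    ultimately show ?thesis unfolding c_def by (simp add: power_strict_mono)
  qed
  define d1 where "d1 = (\<lambda>i. ((\<sigma> i)^2 - c) * (1 - w i))"
  define d2 where "d2 = (\<lambda>i. (c - (\<sigma> i)^2) * w i)"
  have d1n: "d1 i \<ge> 0" if "i < r" for i
    unfolding d1_def using ge[OF that] w1[of i] that r by simp
  have d2n: "d2 i \<ge> 0" if "i \<in> {r..<k}" for i
    unfolding d2_def using lt[of i] w0[of i] that by simp
  have e1: "(\<Sum>i<r. (\<sigma> i)^2 * (1 - w i)) = (\<Sum>i<r. d1 i) + c * (real r - (\<Sum>i<r. w i))"
    unfolding d1_def by (simp add: algebra_simps sum.distrib sum_subtractf sum_distrib_left)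
  have e2: "(\<Sum>i\<in>{r..<k}. (\<sigma> i)^2 * (1 - w i)) = (\<Sum>i\<in>{r..<k}. (\<sigma> i)^2) - c * (\<Sum>i\<in>{r..<k}. w i) + (\<Sum>i\<in>{r..<k}. d2 i)"
    unfolding d2_def by (simp add: algebra_simps sum.distrib sum_subtractf sum_distrib_left)
  have W: "(\<Sum>i<k. w i) = (\<Sum>i<r. w i) + (\<Sum>i\<in>{r..<k}. w i)" by (rule sum_split_at[OF r(2)])
  have key: "(\<Sum>i<k. (\<sigma> i)^2 * (1 - w i)) - (\<Sum>i\<in>{r..<k}. (\<sigma> i)^2)
      = (\<Sum>i<r. d1 i) + (\<Sum>i\<in>{r..<k}. d2 i) + c * (real r - (\<Sum>i<k. w i))"
    using sum_split_at[OF r(2), of "\<lambda>i. (\<sigma> i)^2 * (1 - w i)"] e1 e2 W by (simp add: algebra_simps)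
  have D1: "(\<Sum>i<r. d1 i) \<ge> 0" by (rule sum_nonneg) (simp add: d1n)
  have D2: "(\<Sum>i\<in>{r..<k}. d2 i) \<ge> 0" by (rule sum_nonneg) (simp add: d2n)
  have D3: "c * (real r - (\<Sum>i<k. w i)) \<ge> 0" using cpos ws by simp
  show "(\<Sum>i\<in>{r..<k}. (\<sigma> i)^2) \<le> (\<Sum>i<k. (\<sigma> i)^2 * (1 - w i))"
    using key D1 D2 D3 by linarith
  assume eq: "(\<Sum>i\<in>{r..<k}. (\<sigma> i)^2) = (\<Sum>i<k. (\<sigma> i)^2 * (1 - w i))"
  have z2: "(\<Sum>i\<in>{r..<k}. d2 i) = 0" and z3: "c * (real r - (\<Sum>i<k. w i)) = 0"
    using key D1 D2 D3 eq by linarith+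
  have wz: "w i = 0" if "i \<in> {r..<k}" for i
  proof -
    have "d2 i = 0" using z2 sum_nonneg_eq_0_iff[of "{r..<k}" d2] d2n that by auto
    then show ?thesis unfolding d2_def using lt[of i] that by simp
  qed
  have "(\<Sum>i\<in>{r..<k}. w i) = 0" using wz by simp
  moreover have "(\<Sum>i<k. w i) = real r" using z3 cpos by simp
  ultimately have "(\<Sum>i<r. w i) = real r" using W by simp
  then have "(\<Sum>i<r. 1 - w i) = 0" by (simp add: sum_subtractf)
  then have wo: "1 - w i = 0" if "i < r" for i
    using sum_nonneg_eq_0_iff[of "{..<r}" "\<lambda>i. 1 - w i"] w1 r that by auto
  show "\<forall>i<k. w i = (if i < r then 1 else 0)"
  proof (intro allI impI)
    fix i assume "i < k"
    show "w i = (if i < r then 1 else 0)"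
      using wo[of i] wz[of i] \<open>i < k\<close> by (cases "i < r") auto
  qed
qed

lemma fs_cong:
  "(\<And>a b. a < m \<Longrightarrow> b < c \<Longrightarrow> X a b = Y a b) \<Longrightarrow> fs m c X = fs m c Y"
  unfolding fs_def by (intro sum.cong refl) auto

lemma fs_nonneg: "fs m c X \<ge> 0"
  unfolding fs_def by (intro sum_nonneg) auto

lemma fs_zero:
  assumes "fs m c X = 0" "a < m" "b < c"
  shows "X a b = 0"
proof -
  have "(\<Sum>b<c. (X a b)^2) = 0"
    using assms(1,2) sum_nonneg_eq_0_iff[of "{..<m}" "\<lambda>a. \<Sum>b<c. (X a b)^2"]
    unfolding fs_def by (simp add: sum_nonneg)
  then have "(X a b)^2 = 0"
    using assms(3) sum_nonneg_eq_0_iff[of "{..<c}" "\<lambda>b. (X a b)^2"] by simp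
  then show ?thesis by simp
qed

lemma sum_if_lt:
  fixes r k :: nat
  assumes "r \<le> k"
  shows "(\<Sum>i<k. if i < r then f i else 0) = (\<Sum>i<r. (f i :: real))"
  using sum_split_at[OF assms, of "\<lambda>i. if i < r then f i else 0"] by simp

lemma eckart_young:
  fixes P Q A B :: "nat \<Rightarrow> nat \<Rightarrow> real" and \<sigma> :: "nat \<Rightarrow> real"
  assumes oP: "ortho m k P" and oQ: "ortho n k Q" and km: "k \<le> m"
    and r: "1 \<le> r" "r \<le> k"
    and dec: "\<And>i j. i < j \<Longrightarrow> j < k \<Longrightarrow> \<sigma> j < \<sigma> i"
    and pos: "\<And>i. i < k \<Longrightarrow> 0 < \<sigma> i"
  shows "(\<Sum>i\<in>{r..<k}. (\<sigma> i)^2) \<le>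
           fs m n (\<lambda>a b. (\<Sum>i<k. \<sigma> i * P a i * Q b i) - (\<Sum>l<r. A a l * B b l))"
    and "fs m n (\<lambda>a b. (\<Sum>i<k. \<sigma> i * P a i * Q b i) - (\<Sum>l<r. A a l * B b l)) = (\<Sum>i\<in>{r..<k}. (\<sigma> i)^2)
         \<Longrightarrow> \<forall>a<m. \<forall>b<n. (\<Sum>l<r. A a l * B b l) = (\<Sum>i<r. \<sigma> i * P a i * Q b i)"
proof -
  define M where "M = (\<lambda>a b. \<Sum>i<k. \<sigma> i * P a i * Q b i)"
  define X where "X = (\<lambda>a b. \<Sum>l<r. A a l * B b l)"
  from qr[of r m A] r km obtain E C where
    EC: "ortho m r E" "\<forall>a<m. \<forall>l<r. A a l = (\<Sum>j<r. E a j * C j l)" by auto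
  define Z where "Z = (\<lambda>j b. \<Sum>l<r. C j l * B b l)"
  have hX: "X a b = (\<Sum>j<r. E a j * Z j b)" if "a < m" for a b
  proof -
    have "X a b = (\<Sum>l<r. (\<Sum>j<r. E a j * C j l) * B b l)"
      unfolding X_def using EC(2) that by simp
    also have "\<dots> = (\<Sum>l<r. \<Sum>j<r. E a j * (C j l * B b l))"
      by (simp add: sum_distrib_right mult.assoc)
    also have "\<dots> = (\<Sum>j<r. \<Sum>l<r. E a j * (C j l * B b l))"
      by (rule sum.swap)
    also have "\<dots> = (\<Sum>j<r. E a j * Z j b)"
      unfolding Z_def by (simp add: sum_distrib_left)
    finally show ?thesis .
  qed
  define G where "G = (\<lambda>j i. \<Sum>a<m. E a j * P a i)"
  define N where "N = (\<lambda>j b. \<Sum>a<m. E a j * M a b)"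
  have hN: "N j b = (\<Sum>i<k. (\<sigma> i * G j i) * Q b i)" for j b
    unfolding N_def M_def G_def
    by (simp add: sum_distrib_left sum_distrib_right sum.swap[of _ "{..<k}"] algebra_simps)
  define R where "R = (\<lambda>a b. M a b - (\<Sum>j<r. E a j * N j b))"
  have orthR: "\<forall>j<r. \<forall>c<n. (\<Sum>a<m. E a j * R a c) = 0"
    unfolding R_def N_def by (intro allI impI) (rule resid_orth[OF EC(1)])
  have d1: "fs m n (\<lambda>a b. M a b - X a b) = fs m n R + fs r n (\<lambda>j b. N j b - Z j b)"
  proof -
    have "fs m n (\<lambda>a b. M a b - X a b) = fs m n (\<lambda>a b. R a b + (\<Sum>j<r. E a j * (N j b - Z j b)))"
      by (rule fs_cong) (simp add: hX R_def right_diff_distrib sum_subtractf)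
    also have "\<dots> = fs m n R + fs r n (\<lambda>j b. N j b - Z j b)"
      by (rule pyth[OF EC(1) orthR])
    finally show ?thesis .
  qed
  have d2: "fs m n M = fs m n R + fs r n N"
  proof -
    have "fs m n M = fs m n (\<lambda>a b. R a b + (\<Sum>j<r. E a j * N j b))"
      by (rule fs_cong) (simp add: R_def)
    also have "\<dots> = fs m n R + fs r n N"
      by (rule pyth[OF EC(1) orthR])
    finally show ?thesis .
  qed
  have fM: "fs m n M = (\<Sum>i<k. (\<sigma> i)^2)"
    unfolding M_def by (rule fs_diag[OF oP oQ])
  define w where "w = (\<lambda>i. \<Sum>j<r. (G j i)^2)"
  have fN: "fs r n N = (\<Sum>i<k. (\<sigma> i)^2 * w i)"
  proof -
    have "fs r n N = fs r n (\<lambda>j b. \<Sum>i<k. (\<sigma> i * G j i) * Q b i)"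
      by (rule fs_cong) (simp add: hN)
    also have "\<dots> = fs r k (\<lambda>j i. \<sigma> i * G j i)"
      by (rule iso_right[OF oQ])
    also have "\<dots> = (\<Sum>i<k. (\<sigma> i)^2 * w i)"
      unfolding fs_def w_def
      by (simp add: sum.swap[of _ "{..<k}"] sum_distrib_left power_mult_distrib)
    finally show ?thesis .
  qed
  have main: "fs m n (\<lambda>a b. M a b - X a b) = (\<Sum>i<k. (\<sigma> i)^2 * (1 - w i)) + fs r n (\<lambda>j b. N j b - Z j b)"
    using d1 d2 fM fN by (simp add: algebra_simps sum_subtractf)
  have w0: "0 \<le> w i" for i unfolding w_def by (simp add: sum_nonneg)
  have w1: "w i \<le> 1" if "i < k" for i
  proof -
    have "w i \<le> (\<Sum>a<m. (P a i)^2)"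
      unfolding w_def G_def using bessel[OF EC(1), of "\<lambda>a. P a i"] by simp
    also have "\<dots> = 1" using oP that unfolding ortho_def by (simp add: power2_eq_square)
    finally show ?thesis .
  qed
  have ws: "(\<Sum>i<k. w i) \<le> real r"
  proof -
    have "(\<Sum>i<k. w i) = (\<Sum>j<r. \<Sum>i<k. (\<Sum>a<m. P a i * E a j)^2)"
      unfolding w_def G_def by (subst sum.swap) (simp add: mult.commute)
    also have "\<dots> \<le> (\<Sum>j<r. \<Sum>a<m. (E a j)^2)"
      by (rule sum_mono) (rule bessel[OF oP])
    also have "\<dots> = real r" using EC(1) unfolding ortho_def by (simp add: power2_eq_square)
    finally show ?thesis .
  qed
  have w0': "\<And>i. i < k \<Longrightarrow> 0 \<le> w i" using w0 by simp
  have sb1: "(\<Sum>i\<in>{r..<k}. (\<sigma> i)^2) \<le> (\<Sum>i<k. (\<sigma> i)^2 * (1 - w i))"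
    by (rule scalar_bound(1)[where \<sigma>=\<sigma> and w=w and r=r and k=k]) (use r dec pos w0' w1 ws in auto)
  have fnz: "fs r n (\<lambda>j b. N j b - Z j b) \<ge> 0" by (rule fs_nonneg)
  show "(\<Sum>i\<in>{r..<k}. (\<sigma> i)^2) \<le> fs m n (\<lambda>a b. (\<Sum>i<k. \<sigma> i * P a i * Q b i) - (\<Sum>l<r. A a l * B b l))"
    using main sb1 fnz unfolding M_def X_def by linarith
  assume eq: "fs m n (\<lambda>a b. (\<Sum>i<k. \<sigma> i * P a i * Q b i) - (\<Sum>l<r. A a l * B b l)) = (\<Sum>i\<in>{r..<k}. (\<sigma> i)^2)"
  then have eq': "fs m n (\<lambda>a b. M a b - X a b) = (\<Sum>i\<in>{r..<k}. (\<sigma> i)^2)" unfolding M_def X_def .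
  have e1: "(\<Sum>i\<in>{r..<k}. (\<sigma> i)^2) = (\<Sum>i<k. (\<sigma> i)^2 * (1 - w i))"
    and e2: "fs r n (\<lambda>j b. N j b - Z j b) = 0"
    using main sb1 fnz eq' by linarith+
  have wv: "\<forall>i<k. w i = (if i < r then 1 else 0)"
    by (rule scalar_bound(2)[where \<sigma>=\<sigma> and w=w and r=r and k=k]) (use r dec pos w0' w1 ws e1 in auto)
  have NZ: "N j b = Z j b" if "j < r" "b < n" for j b
    using fs_zero[OF e2 that] by simp
  have EG: "(\<Sum>j<r. E a j * G j i) = (if i < r then P a i else 0)" if "a < m" "i < k" for a i
  proof (cases "i < r")
    case True
    have wi: "w i = 1" using wv that True by simp
    have "(\<Sum>a<m. (P a i)^2) = 1" using oP that unfolding ortho_def by (simp add: power2_eq_square)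
    moreover have "(\<Sum>a<m. (P a i)^2) = (\<Sum>a<m. (P a i - (\<Sum>j<r. E a j * G j i))^2) + w i"
      using bessel_eq[OF EC(1), of "\<lambda>a. P a i"] unfolding w_def G_def by simp
    ultimately have "(\<Sum>a<m. (P a i - (\<Sum>j<r. E a j * G j i))^2) = 0" using wi by simp
    then have "(P a i - (\<Sum>j<r. E a j * G j i))^2 = 0"
      using sum_nonneg_eq_0_iff[of "{..<m}" "\<lambda>a. (P a i - (\<Sum>j<r. E a j * G j i))^2"] that by simp
    then show ?thesis using True by simp
  next
    case False
    have "w i = 0" using wv that False by simp
    then have "(G j i)^2 = 0" if "j < r" for j
      using sum_nonneg_eq_0_iff[of "{..<r}" "\<lambda>j. (G j i)^2"] that unfolding w_def by simp
    then show ?thesis using False by simp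
  qed
  show "\<forall>a<m. \<forall>b<n. (\<Sum>l<r. A a l * B b l) = (\<Sum>i<r. \<sigma> i * P a i * Q b i)"
  proof (intro allI impI)
    fix a b assume ab: "a < m" "b < n"
    have "(\<Sum>l<r. A a l * B b l) = X a b" unfolding X_def ..
    also have "\<dots> = (\<Sum>j<r. E a j * N j b)" using hX[OF ab(1)] NZ ab(2) by simp
    also have "\<dots> = (\<Sum>i<k. \<sigma> i * (\<Sum>j<r. E a j * G j i) * Q b i)"
      unfolding hN by (simp add: sum_distrib_left sum_distrib_right sum.swap[of _ "{..<k}"] algebra_simps)
    also have "\<dots> = (\<Sum>i<k. if i < r then \<sigma> i * P a i * Q b i else 0)"
      by (intro sum.cong refl) (simp add: EG[OF ab(1)])
    also have "\<dots> = (\<Sum>i<r. \<sigma> i * P a i * Q b i)" by (rule sum_if_lt[OF r(2)])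
    finally show "(\<Sum>l<r. A a l * B b l) = (\<Sum>i<r. \<sigma> i * P a i * Q b i)" .
  qed
qed

lemma mult_entry:
  fixes A B :: "real mat"
  assumes "A \<in> carrier_mat m p" "B \<in> carrier_mat p q" "a < m" "b < q"
  shows "(A * B) $$ (a, b) = (\<Sum>l<p. A $$ (a, l) * B $$ (l, b))"
  using assms by (simp add: scalar_prod_def lessThan_atLeast0)

lemma ortho_of_mat:
  fixes P :: "real mat"
  assumes "P \<in> carrier_mat m k" "transpose_mat P * P = 1\<^sub>m k"
  shows "ortho m k (\<lambda>a i. P $$ (a, i))"
  unfolding ortho_def
proof (intro allI impI)
  fix j j' assume j: "j < k" "j' < k"
  have "(transpose_mat P * P) $$ (j, j') = (\<Sum>a<m. transpose_mat P $$ (j, a) * P $$ (a, j'))"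
    by (rule mult_entry[of _ k m _ k]) (use assms j in auto)
  also have "\<dots> = (\<Sum>a<m. P $$ (a, j) * P $$ (a, j'))"
    using assms(1) j by (intro sum.cong refl) auto
  finally show "(\<Sum>a<m. P $$ (a, j) * P $$ (a, j')) = (if j = j' then 1 else 0)"
    using assms(2) j by simp
qed

lemma frob_sq:
  assumes "X \<in> carrier_mat m n"
  shows "(frob_norm X)^2 = fs m n (\<lambda>a b. X $$ (a, b))"
proof -
  have "fs m n (\<lambda>a b. X $$ (a, b)) \<ge> 0" by (rule fs_nonneg)
  then show ?thesis using assms unfolding frob_norm_def fs_def by simp
qed

lemma sel_entry:
  fixes U V :: "real mat"
  assumes "U \<in> carrier_mat m k" "V \<in> carrier_mat n k" "a < m" "b < n"
  shows "(U * sel_mat k S * transpose_mat V) $$ (a, b) = (\<Sum>l<k. if l \<in> S then U $$ (a, l) * V $$ (b, l) else 0)"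
proof -
  have US: "U * sel_mat k S \<in> carrier_mat m k" using assms(1) unfolding sel_mat_def by simp
  have e1: "(U * sel_mat k S) $$ (a, l) = (if l \<in> S then U $$ (a, l) else 0)" if "l < k" for l
  proof -
    have "(U * sel_mat k S) $$ (a, l) = (\<Sum>l'<k. U $$ (a, l') * sel_mat k S $$ (l', l))"
      by (rule mult_entry[of _ m k _ k]) (use assms that in \<open>auto simp: sel_mat_def\<close>)
    also have "\<dots> = (\<Sum>l'<k. if l' = l then (if l \<in> S then U $$ (a, l) else 0) else 0)"
      using that by (intro sum.cong refl) (auto simp: sel_mat_def)
    also have "\<dots> = (if l \<in> S then U $$ (a, l) else 0)" using that by simp
    finally show ?thesis .
  qed
  have "(U * sel_mat k S * transpose_mat V) $$ (a, b) = (\<Sum>l<k. (U * sel_mat k S) $$ (a, l) * transpose_mat V $$ (l, b))"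
    by (rule mult_entry[OF US]) (use assms in auto)
  also have "\<dots> = (\<Sum>l<k. if l \<in> S then U $$ (a, l) * V $$ (b, l) else 0)"
    using assms by (intro sum.cong refl) (simp add: e1)
  finally show ?thesis .
qed

lemma diag_left_entry:
  fixes P :: "real mat"
  assumes "P \<in> carrier_mat m k" "a < m" "i < k"
  shows "(P * diag_sv k \<sigma>) $$ (a, i) = \<sigma> i * P $$ (a, i)"
proof -
  have "(P * diag_sv k \<sigma>) $$ (a, i) = (\<Sum>l<k. P $$ (a, l) * diag_sv k \<sigma> $$ (l, i))"
    by (rule mult_entry[of _ m k _ k]) (use assms in \<open>auto simp: diag_sv_def\<close>)
  also have "\<dots> = (\<Sum>l<k. if l = i then \<sigma> i * P $$ (a, i) else 0)"
    using assms by (intro sum.cong refl) (auto simp: diag_sv_def)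
  finally show ?thesis using assms by simp
qed

lemma svd_entry:
  fixes P Q :: "real mat"
  assumes "P \<in> carrier_mat m k" "Q \<in> carrier_mat n k" "a < m" "b < n"
  shows "(P * diag_sv k \<sigma> * transpose_mat Q) $$ (a, b) = (\<Sum>i<k. \<sigma> i * P $$ (a, i) * Q $$ (b, i))"
proof -
  have PD: "P * diag_sv k \<sigma> \<in> carrier_mat m k" using assms(1) unfolding diag_sv_def by simp
  have "(P * diag_sv k \<sigma> * transpose_mat Q) $$ (a, b) = (\<Sum>i<k. (P * diag_sv k \<sigma>) $$ (a, i) * transpose_mat Q $$ (i, b))"
    by (rule mult_entry[OF PD]) (use assms in auto)
  also have "\<dots> = (\<Sum>i<k. \<sigma> i * P $$ (a, i) * Q $$ (b, i))"
    using assms by (intro sum.cong refl) (simp add: diag_left_entry)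
  finally show ?thesis .
qed

lemma sel_carrier: "sel_mat k S \<in> carrier_mat k k"
  unfolding sel_mat_def by simp

lemma usv_carrier:
  fixes U V :: "real mat"
  assumes "U \<in> carrier_mat m k" "V \<in> carrier_mat n k" "B \<in> carrier_mat m n"
  shows "U * sel_mat k S * transpose_mat V - B \<in> carrier_mat m n"
  by (rule minus_carrier_mat[OF assms(3)])

lemma fs_minus_swap: "fs m c (\<lambda>a b. X a b - Y a b) = fs m c (\<lambda>a b. Y a b - X a b)"
  unfolding fs_def by (simp add: power2_commute)

theorem theorem4p3:
  fixes m n k :: nat and Mstar P Q :: "real mat" and \<sigma> :: "nat \<Rightarrow> real"
  assumes "m \<ge> 1" and "n \<ge> 1" and "k = min m n"
    and "Mstar \<in> carrier_mat m n"
    and "P \<in> carrier_mat m k" and "Q \<in> carrier_mat n k"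
    and "transpose_mat P * P = 1\<^sub>m k" and "transpose_mat Q * Q = 1\<^sub>m k"
    and "Mstar = P * diag_sv k \<sigma> * transpose_mat Q"
    and "\<And>i j. i < j \<Longrightarrow> j < k \<Longrightarrow> \<sigma> i > \<sigma> j"
    and "\<And>i. i < k \<Longrightarrow> \<sigma> i > 0"
  shows "\<forall>(U,V) \<in> M_NSL m n k Mstar. \<forall>r \<in> {1..k}. err_E k U V (trunc_svd m n P Q \<sigma> r) r = 0"
proof -
  note Pc = assms(5) and Qc = assms(6)
  have oP: "ortho m k (\<lambda>a i. P $$ (a, i))" by (rule ortho_of_mat[OF assms(5,7)])
  have oQ: "ortho n k (\<lambda>a i. Q $$ (a, i))" by (rule ortho_of_mat[OF assms(6,8)])
  have km: "k \<le> m" using assms(3) by simp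
  have k1: "k \<ge> 1" using assms(1,2,3) by simp
  have dec: "\<And>i j. i < j \<Longrightarrow> j < k \<Longrightarrow> \<sigma> j < \<sigma> i" using assms(10) by blast
  have pos: "\<And>i. i < k \<Longrightarrow> 0 < \<sigma> i" using assms(11) by blast
  define Mf where "Mf = (\<lambda>a b. \<Sum>i<k. \<sigma> i * P $$ (a, i) * Q $$ (b, i))"
  define tail where "tail = (\<lambda>r. \<Sum>i\<in>{r..<k}. (\<sigma> i)^2)"
  define T where "T = (\<lambda>U V r. (frob_norm (U * sel_mat k {0..<r} * transpose_mat V - Mstar))^2)"
  have Mentry: "Mstar $$ (a, b) = Mf a b" if "a < m" "b < n" for a b
    unfolding assms(9) Mf_def by (rule svd_entry[OF Pc Qc that])
  have Tfs: "T U V r = fs m n (\<lambda>a b. Mf a b - (\<Sum>l<r. U $$ (a, l) * V $$ (b, l)))"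
    if U: "U \<in> carrier_mat m k" and V: "V \<in> carrier_mat n k" and rk: "r \<le> k" for U V r
  proof -
    have Xc: "U * sel_mat k {0..<r} * transpose_mat V - Mstar \<in> carrier_mat m n"
      by (rule usv_carrier[OF U V assms(4)])
    have "T U V r = fs m n (\<lambda>a b. (U * sel_mat k {0..<r} * transpose_mat V - Mstar) $$ (a, b))"
      unfolding T_def by (rule frob_sq[OF Xc])
    also have "\<dots> = fs m n (\<lambda>a b. (\<Sum>l<r. U $$ (a, l) * V $$ (b, l)) - Mf a b)"
    proof (rule fs_cong)
      fix a b assume ab: "a < m" "b < n"
      have "(U * sel_mat k {0..<r} * transpose_mat V - Mstar) $$ (a, b) =
          (U * sel_mat k {0..<r} * transpose_mat V) $$ (a, b) - Mstar $$ (a, b)"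
        using ab carrier_matD[OF assms(4)] by simp
      also have "\<dots> = (\<Sum>l<k. if l < r then U $$ (a, l) * V $$ (b, l) else 0) - Mf a b"
        using sel_entry[OF U V ab, of "{0..<r}"] Mentry[OF ab] by simp
      also have "\<dots> = (\<Sum>l<r. U $$ (a, l) * V $$ (b, l)) - Mf a b"
        using sum_if_lt[OF rk] by simp
      finally show "(U * sel_mat k {0..<r} * transpose_mat V - Mstar) $$ (a, b) =
          (\<Sum>l<r. U $$ (a, l) * V $$ (b, l)) - Mf a b" .
    qed
    also have "\<dots> = fs m n (\<lambda>a b. Mf a b - (\<Sum>l<r. U $$ (a, l) * V $$ (b, l)))"
      by (rule fs_minus_swap)
    finally show ?thesis .
  qed
  have lower: "tail r \<le> T U V r"
    if U: "U \<in> carrier_mat m k" and V: "V \<in> carrier_mat n k" and r: "1 \<le> r" "r \<le> k" for U V r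
    unfolding Tfs[OF U V r(2)] tail_def Mf_def
    by (rule eckart_young(1)[where \<sigma>=\<sigma> and k=k and r=r and m=m and n=n]) (use oP oQ km r dec pos in auto)
  define U0 where "U0 = P * diag_sv k \<sigma>"
  have U0c: "U0 \<in> carrier_mat m k" unfolding U0_def diag_sv_def using Pc by simp
  have T0: "T U0 Q r = tail r" if r: "r \<le> k" for r
  proof -
    have "T U0 Q r = fs m n (\<lambda>a b. Mf a b - (\<Sum>l<r. U0 $$ (a, l) * Q $$ (b, l)))"
      by (rule Tfs[OF U0c Qc r])
    also have "\<dots> = fs m n (\<lambda>a b. \<Sum>i<k. (if i < r then 0 else \<sigma> i) * P $$ (a, i) * Q $$ (b, i))"
    proof (rule fs_cong)
      fix a b assume ab: "a < m" "b < n"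
      have "(\<Sum>l<r. U0 $$ (a, l) * Q $$ (b, l)) = (\<Sum>l<r. \<sigma> l * P $$ (a, l) * Q $$ (b, l))"
        unfolding U0_def using r ab by (intro sum.cong refl) (simp add: diag_left_entry[OF Pc])
      moreover have "Mf a b = (\<Sum>l<r. \<sigma> l * P $$ (a, l) * Q $$ (b, l)) + (\<Sum>i\<in>{r..<k}. \<sigma> i * P $$ (a, i) * Q $$ (b, i))"
        unfolding Mf_def by (rule sum_split_at[OF r])
      moreover have "(\<Sum>i<k. (if i < r then 0 else \<sigma> i) * P $$ (a, i) * Q $$ (b, i)) = (\<Sum>i\<in>{r..<k}. \<sigma> i * P $$ (a, i) * Q $$ (b, i))"
        using sum_split_at[OF r, of "\<lambda>i. (if i < r then 0 else \<sigma> i) * P $$ (a, i) * Q $$ (b, i)"] by simp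
      ultimately show "Mf a b - (\<Sum>l<r. U0 $$ (a, l) * Q $$ (b, l)) = (\<Sum>i<k. (if i < r then 0 else \<sigma> i) * P $$ (a, i) * Q $$ (b, i))"
        by simp
    qed
    also have "\<dots> = (\<Sum>i<k. (if i < r then 0 else \<sigma> i)^2)"
      by (rule fs_diag[OF oP oQ])
    also have "\<dots> = tail r"
      unfolding tail_def using sum_split_at[OF r, of "\<lambda>i. (if i < r then 0 else \<sigma> i)^2"] by simp
    finally show ?thesis .
  qed
  have key: "err_E k U V (trunc_svd m n P Q \<sigma> r) r = 0"
    if UV: "(U, V) \<in> M_NSL m n k Mstar" and r: "r \<in> {1..k}" for U V r
  proof -
    have U: "U \<in> carrier_mat m k" and V: "V \<in> carrier_mat n k"
      and opt: "nsl_loss k Mstar U V \<le> nsl_loss k Mstar U0 Q"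
      using UV U0c Qc unfolding M_NSL_def by auto
    have "(1 / real k) * (\<Sum>r=1..k. T U V r) \<le> (1 / real k) * (\<Sum>r=1..k. T U0 Q r)"
      using opt unfolding nsl_loss_def T_def .
    then have "(\<Sum>r=1..k. T U V r) \<le> (\<Sum>r=1..k. T U0 Q r)" using k1 by (simp add: divide_le_cancel)
    also have "\<dots> = (\<Sum>r=1..k. tail r)" by (intro sum.cong refl) (simp add: T0)
    finally have "(\<Sum>r=1..k. T U V r - tail r) \<le> 0" by (simp add: sum_subtractf)
    moreover have "\<forall>r\<in>{1..k}. T U V r - tail r \<ge> 0" using lower[OF U V] by auto
    moreover have "(\<Sum>r=1..k. T U V r - tail r) \<ge> 0"
      by (rule sum_nonneg) (use \<open>\<forall>r\<in>{1..k}. T U V r - tail r \<ge> 0\<close> in blast)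
    ultimately have "(\<Sum>r=1..k. T U V r - tail r) = 0" by linarith
    then have "T U V r - tail r = 0" using sum_nonneg_eq_0_iff[of "{1..k}" "\<lambda>r. T U V r - tail r"]
      \<open>\<forall>r\<in>{1..k}. T U V r - tail r \<ge> 0\<close> r by auto
    then have "fs m n (\<lambda>a b. Mf a b - (\<Sum>l<r. U $$ (a, l) * V $$ (b, l))) = tail r"
      using Tfs[OF U V] r by simp
    then have Xr: "\<forall>a<m. \<forall>b<n. (\<Sum>l<r. U $$ (a, l) * V $$ (b, l)) = (\<Sum>i<r. \<sigma> i * P $$ (a, i) * Q $$ (b, i))"
      unfolding Mf_def tail_def
      by (intro eckart_young(2)[where \<sigma>=\<sigma> and k=k and r=r and m=m and n=n]) (use oP oQ km r dec pos in auto)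
    define Ar where "Ar = trunc_svd m n P Q \<sigma> r"
    have Arc: "Ar \<in> carrier_mat m n" unfolding Ar_def trunc_svd_def by simp
    have zero: "(frob_norm (U * sel_mat k {0..<r} * transpose_mat V - Ar))^2 = 0"
    proof -
      have Xc: "U * sel_mat k {0..<r} * transpose_mat V - Ar \<in> carrier_mat m n"
        by (rule usv_carrier[OF U V Arc])
      have "(frob_norm (U * sel_mat k {0..<r} * transpose_mat V - Ar))^2
          = fs m n (\<lambda>a b. (U * sel_mat k {0..<r} * transpose_mat V - Ar) $$ (a, b))"
        by (rule frob_sq[OF Xc])
      also have "\<dots> = fs m n (\<lambda>a b. 0)"
      proof (rule fs_cong)
        fix a b assume ab: "a < m" "b < n"
        have "(U * sel_mat k {0..<r} * transpose_mat V - Ar) $$ (a, b) =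
            (U * sel_mat k {0..<r} * transpose_mat V) $$ (a, b) - Ar $$ (a, b)"
          using ab carrier_matD[OF Arc] by simp
        also have "\<dots> = (\<Sum>l<k. if l < r then U $$ (a, l) * V $$ (b, l) else 0) - (\<Sum>i<r. \<sigma> i * P $$ (a, i) * Q $$ (b, i))"
          using sel_entry[OF U V ab, of "{0..<r}"] ab unfolding Ar_def trunc_svd_def by simp
        also have "\<dots> = 0" using sum_if_lt[of r k] r Xr ab by simp
        finally show "(U * sel_mat k {0..<r} * transpose_mat V - Ar) $$ (a, b) = 0" .
      qed
      also have "\<dots> = 0" unfolding fs_def by simp
      finally show ?thesis .
    qed
    have fin: "finite {(frob_norm (U * sel_mat k S * transpose_mat V - Ar))^2 | S. S \<subseteq> {0..<k} \<and> card S = r}"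
      by (rule finite_image_set) simp
    have mem: "0 \<in> {(frob_norm (U * sel_mat k S * transpose_mat V - Ar))^2 | S. S \<subseteq> {0..<k} \<and> card S = r}"
      using zero r by (intro CollectI exI[of _ "{0..<r}"]) auto
    show ?thesis unfolding err_E_def Ar_def[symmetric]
      by (rule Min_eqI[OF fin _ mem]) auto
  qed
  show ?thesis using key by auto
qed

end
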